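(* In a large society in which the mean-field and wisdom assumptions hold, a shock election can occur with confirmation bias ($q>0$), but never occurs without confirmation bias ($q=0$).
   Context: There are $n$ voters communicating through a network $T$ (an $n\times n$ row-stochastic matrix, strongly connected and aperiodic); under confirmation bias $q\in[0,1]$ they communicate through $T^*$, defined by: for $j\ne i$, if $|x_{i0}-x_{j0}|>1-q$ then $T^*_{ij}=0$ and $T_{ij}$ is added to $T^*_{ii}$, otherwise $T^*_{ij}=T_{ij}$ ($T^*$ strongly connected). Beliefs evolve by $x_t=T^*x_{t-1}$. Two candidates have ideologies $0$ ("Left") and $1$ ("Right"). Each voter's initial belief lies in $\{x_{EL},x_{CL},x_S,x_{CR},x_{ER}\}$ with $x_{EL}<x_{CL}<x_S=\tfrac12<x_{CR}<x_{ER}$; $f_k\in(0,1)$ is the fraction with belief $x_k$, $\sum_k f_k=1$, and it is assumed $f_{EL}+f_{CL}>f_{CR}+f_{ER}$ and $\sum_k x_k f_k<\tfrac12$. In an election at time $t$, voter $i$ votes Left if $x_{it}<\tfrac12$, Right if $x_{it}>\tfrac12$, and each with probability $\tfrac12$ if $x_{it}=\tfrac12$; the candidate with most votes wins (ties by coin toss). Wisdom: every agent's influence (entry of the left eigenvector for eigenvalue 1 of the network, normalized to sum 1) is $O(1/n)$. Mean-field assumption: for every $i$, the average initial belief of $i$'s neighbours (other than $i$) is approximately the society mean $\mu$, and initial beliefs are independent of link weights. A shock election occurs if there is a time $0<t<\infty$ at which the Right wins the election. *)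

theory Defs
  imports Main "HOL.Real"
begin

text \<open>Matrices are functions nat => nat => real on the index set {0..<n}.
  Type k (k < 5) stands for EL, CL, S, CR, ER in this order.\<close>

fun mpow :: "nat \<Rightarrow> (nat \<Rightarrow> nat \<Rightarrow> real) \<Rightarrow> nat \<Rightarrow> nat \<Rightarrow> nat \<Rightarrow> real" where
  "mpow n T 0 i j = (if i = j then 1 else 0)"
| "mpow n T (Suc t) i j = (\<Sum>l<n. T i l * mpow n T t l j)"

definition row_stochastic :: "nat \<Rightarrow> (nat \<Rightarrow> nat \<Rightarrow> real) \<Rightarrow> bool" where
  "row_stochastic n T \<longleftrightarrow> (\<forall>i<n. (\<forall>j<n. 0 \<le> T i j) \<and> (\<Sum>j<n. T i j) = 1)"

definition strongly_connected :: "nat \<Rightarrow> (nat \<Rightarrow> nat \<Rightarrow> real) \<Rightarrow> bool" where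
  "strongly_connected n T \<longleftrightarrow> (\<forall>i<n. \<forall>j<n. \<exists>t. 0 < mpow n T t i j)"

definition aperiodic :: "nat \<Rightarrow> (nat \<Rightarrow> nat \<Rightarrow> real) \<Rightarrow> bool" where
  "aperiodic n T \<longleftrightarrow> (\<forall>i<n. Gcd {t. 0 < t \<and> 0 < mpow n T t i i} = 1)"

definition influence :: "nat \<Rightarrow> (nat \<Rightarrow> nat \<Rightarrow> real) \<Rightarrow> (nat \<Rightarrow> real) \<Rightarrow> bool" where
  "influence n T s \<longleftrightarrow> (\<forall>i<n. 0 \<le> s i) \<and> (\<Sum>i<n. s i) = 1 \<and>
     (\<forall>j<n. (\<Sum>i<n. s i * T i j) = s j)"

definition wise :: "real \<Rightarrow> nat \<Rightarrow> (nat \<Rightarrow> nat \<Rightarrow> real) \<Rightarrow> bool" where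
  "wise C n T \<longleftrightarrow> (\<exists>s. influence n T s \<and> (\<forall>i<n. s i \<le> C / real n))"

definition tstar :: "nat \<Rightarrow> real \<Rightarrow> (nat \<Rightarrow> real) \<Rightarrow> (nat \<Rightarrow> nat \<Rightarrow> real) \<Rightarrow> nat \<Rightarrow> nat \<Rightarrow> real" where
  "tstar n q x0 T i j =
     (if i \<noteq> j then (if \<bar>x0 i - x0 j\<bar> > 1 - q then 0 else T i j)
      else T i i + (\<Sum>l\<in>{l. l < n \<and> l \<noteq> i \<and> \<bar>x0 i - x0 l\<bar> > 1 - q}. T i l))"

definition belief :: "nat \<Rightarrow> (nat \<Rightarrow> nat \<Rightarrow> real) \<Rightarrow> (nat \<Rightarrow> real) \<Rightarrow> nat \<Rightarrow> nat \<Rightarrow> real" where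
  "belief n T x0 t i = (\<Sum>j<n. mpow n T t i j * x0 j)"

definition left_votes :: "nat \<Rightarrow> (nat \<Rightarrow> real) \<Rightarrow> nat" where
  "left_votes n x = card {i. i < n \<and> x i < 1/2}"
definition right_votes :: "nat \<Rightarrow> (nat \<Rightarrow> real) \<Rightarrow> nat" where
  "right_votes n x = card {i. i < n \<and> x i > 1/2}"
definition indiff_votes :: "nat \<Rightarrow> (nat \<Rightarrow> real) \<Rightarrow> nat" where
  "indiff_votes n x = card {i. i < n \<and> x i = 1/2}"

text \<open>Probability that the Right wins when L voters vote Left, R vote Right and U
  voters each vote by an independent fair coin; ties are broken by a fair coin.\<close>
definition right_win_prob :: "nat \<Rightarrow> nat \<Rightarrow> nat \<Rightarrow> real" where
  "right_win_prob L R U = (\<Sum>k\<le>U. real (U choose k) / 2 ^ U *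
      (if R + k > L + (U - k) then 1 else if R + k = L + (U - k) then 1/2 else 0))"

definition prob_right_wins :: "nat \<Rightarrow> (nat \<Rightarrow> real) \<Rightarrow> real" where
  "prob_right_wins n x = right_win_prob (left_votes n x) (right_votes n x) (indiff_votes n x)"

definition params_ok :: "(nat \<Rightarrow> real) \<Rightarrow> (nat \<Rightarrow> real) \<Rightarrow> bool" where
  "params_ok xk f \<longleftrightarrow>
     0 \<le> xk 0 \<and> xk 0 < xk 1 \<and> xk 1 < xk 2 \<and> xk 2 = 1/2 \<and> xk 2 < xk 3 \<and> xk 3 < xk 4 \<and> xk 4 \<le> 1 \<and>
     (\<forall>k<5. 0 < f k \<and> f k < 1) \<and> (\<Sum>k<5. f k) = 1 \<and>
     f 0 + f 1 > f 3 + f 4 \<and> (\<Sum>k<5. xk k * f k) < 1/2"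

definition society :: "(nat \<Rightarrow> real) \<Rightarrow> (nat \<Rightarrow> real) \<Rightarrow> nat \<Rightarrow> (nat \<Rightarrow> real) \<Rightarrow> bool" where
  "society xk f n x0 \<longleftrightarrow> (\<forall>i<n. \<exists>k<5. x0 i = xk k) \<and>
     (\<forall>k<5. real (card {i. i < n \<and> x0 i = xk k}) = f k * real n)"

definition mean_field :: "real \<Rightarrow> nat \<Rightarrow> (nat \<Rightarrow> nat \<Rightarrow> real) \<Rightarrow> (nat \<Rightarrow> real) \<Rightarrow>
     (nat \<Rightarrow> real) \<Rightarrow> (nat \<Rightarrow> real) \<Rightarrow> bool" where
  "mean_field eps n T x0 xk f \<longleftrightarrow> (\<forall>t. \<forall>i<n. \<forall>k<5.
     \<bar>(\<Sum>j\<in>{j. j < n \<and> j \<noteq> i \<and> x0 j = xk k}. mpow n T t i j) - (1 - mpow n T t i i) * f k\<bar>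
       \<le> eps * (1 - mpow n T t i i))"

end

theory Submission
  imports Defs
begin


lemma mpow_nonneg:
  assumes "\<forall>a<n. \<forall>b<n. 0 \<le> A a b" "i < n"
  shows "0 \<le> mpow n A t i j"
  using assms(2)
proof (induction t arbitrary: i)
  case 0 then show ?case by simp
next
  case (Suc t) then show ?case using assms(1) by (auto intro!: sum_nonneg)
qed

lemma mpow_rowsum:
  assumes "row_stochastic n A" "i < n"
  shows "(\<Sum>j<n. mpow n A t i j) = 1"
  using assms(2)
proof (induction t arbitrary: i)
  case 0 then show ?case by (simp add: sum.delta)
next
  case (Suc t)
  have "(\<Sum>j<n. mpow n A (Suc t) i j) = (\<Sum>l<n. A i l * (\<Sum>j<n. mpow n A t l j))"
  proof -
    have "(\<Sum>j<n. mpow n A (Suc t) i j) = (\<Sum>j<n. \<Sum>l<n. A i l * mpow n A t l j)" by simp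
    also have "\<dots> = (\<Sum>l<n. \<Sum>j<n. A i l * mpow n A t l j)" by (rule sum.swap)
    also have "\<dots> = (\<Sum>l<n. A i l * (\<Sum>j<n. mpow n A t l j))" by (simp only: sum_distrib_left)
    finally show ?thesis .
  qed
  also have "\<dots> = (\<Sum>l<n. A i l)" using Suc by simp
  also have "\<dots> = 1" using assms(1) Suc.prems by (simp add: row_stochastic_def)
  finally show ?case .
qed

lemma mpow_one: "j < n \<Longrightarrow> mpow n A 1 i j = A i j"
  by (simp add: if_distrib sum.delta' cong: if_cong)

lemma sum_reassoc: "(\<Sum>l'<n. \<Sum>l<n. (A::nat\<Rightarrow>nat\<Rightarrow>real) i l * (P l l' * Q l' j)) =
     (\<Sum>l'<n. (\<Sum>l<n. A i l * P l l') * Q l' j)"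
  by (simp add: sum_distrib_right mult.assoc)

lemma mpow_add:
  assumes "i < n"
  shows "mpow n A (a + b) i j = (\<Sum>l<n. mpow n A a i l * mpow n A b l j)"
  using assms
proof (induction a arbitrary: i)
  case 0
  have "(\<Sum>l<n. mpow n A 0 i l * mpow n A b l j) = (\<Sum>l<n. if l = i then mpow n A b l j else 0)"
    by (rule sum.cong) auto
  then show ?case using 0 by simp
next
  case (Suc a)
  have "mpow n A (Suc a + b) i j = (\<Sum>l<n. A i l * mpow n A (a + b) l j)"
    by (simp only: add_Suc mpow.simps(2))
  also have "\<dots> = (\<Sum>l<n. A i l * (\<Sum>l'<n. mpow n A a l l' * mpow n A b l' j))"
    by (rule sum.cong[OF refl]) (simp add: Suc.IH)
  also have "\<dots> = (\<Sum>l<n. \<Sum>l'<n. A i l * (mpow n A a l l' * mpow n A b l' j))"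
    by (simp only: sum_distrib_left)
  also have "\<dots> = (\<Sum>l'<n. \<Sum>l<n. A i l * (mpow n A a l l' * mpow n A b l' j))"
    by (rule sum.swap)
  also have "\<dots> = (\<Sum>l'<n. (\<Sum>l<n. A i l * mpow n A a l l') * mpow n A b l' j)"
    by (rule sum_reassoc)
  finally show ?case by (simp only: mpow.simps(2))
qed

lemma mpow_cong:
  assumes "\<forall>a<n. \<forall>b<n. A a b = B a b" "i < n"
  shows "mpow n A t i j = mpow n B t i j"
  using assms(2)
proof (induction t arbitrary: i)
  case 0 then show ?case by simp
next
  case (Suc t)
  have "\<And>l. l \<in> {..<n} \<Longrightarrow> A i l * mpow n A t l j = B i l * mpow n B t l j"
    using assms(1) Suc by simp
  then show ?case by (simp only: mpow.simps(2)) (rule sum.cong[OF refl])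
qed


lemma sum_ge_term:
  assumes "\<forall>l<n. 0 \<le> (g::nat \<Rightarrow> real) l" "i < n"
  shows "g i \<le> (\<Sum>l<n. g l)"
  using assms by (intro member_le_sum) auto

lemma diag_lt1:
  assumes rs: "row_stochastic n T" and sc: "strongly_connected n T" and ap: "aperiodic n T"
    and ij: "j0 < n" "j0 \<noteq> i" and i: "i < n" and t: "0 < t"
  shows "mpow n T t i i < 1"
proof (rule ccontr)
  assume H: "\<not> mpow n T t i i < 1"
  define M where "M = mpow n T"
  have Tnn: "\<forall>a<n. \<forall>b<n. 0 \<le> T a b" using rs by (simp add: row_stochastic_def)
  have Mnn: "\<And>s a b. a < n \<Longrightarrow> 0 \<le> M s a b" unfolding M_def using Tnn mpow_nonneg by blast
  have rsum: "\<And>s a. a < n \<Longrightarrow> (\<Sum>b<n. M s a b) = 1" unfolding M_def using rs mpow_rowsum by blast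
  have split: "(\<Sum>b<n. M t i b) = M t i i + (\<Sum>b\<in>{..<n}-{i}. M t i b)"
    using i by (simp add: sum.remove)
  have rest0: "(\<Sum>b\<in>{..<n}-{i}. M t i b) = 0"
  proof -
    have "0 \<le> (\<Sum>b\<in>{..<n}-{i}. M t i b)" using Mnn i by (intro sum_nonneg) auto
    moreover have "M t i i \<ge> 1" using H M_def by simp
    ultimately show ?thesis using split rsum[OF i, of t] by linarith
  qed
  have z: "\<And>b. b < n \<Longrightarrow> b \<noteq> i \<Longrightarrow> M t i b = 0"
  proof -
    fix b assume b: "b < n" "b \<noteq> i"
    have "\<forall>x\<in>{..<n}-{i}. M t i x = 0"
      using sum_nonneg_eq_0_iff[of "{..<n}-{i}" "M t i"] rest0 Mnn i by auto
    then show "M t i b = 0" using b by auto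
  qed
  have Mtii: "M t i i = 1" using split rest0 rsum[OF i, of t] by linarith
  have per: "\<And>s b. M (t + s) i b = M s i b"
  proof -
    fix s b
    have "M (t + s) i b = (\<Sum>l<n. M t i l * M s l b)" unfolding M_def using mpow_add[OF i] by blast
    also have "\<dots> = (\<Sum>l<n. if l = i then M s i b else 0)"
      by (rule sum.cong[OF refl]) (auto simp: z Mtii)
    also have "\<dots> = M s i b" using i by simp
    finally show "M (t + s) i b = M s i b" .
  qed
  have perk: "\<And>c s b. M (c * t + s) i b = M s i b"
  proof -
    fix c s b show "M (c * t + s) i b = M s i b"
    proof (induction c)
      case 0 then show ?case by simp
    next
      case (Suc c)
      have "Suc c * t + s = t + (c * t + s)" by simp
      then have "M (Suc c * t + s) i b = M (t + (c * t + s)) i b" by (simp only:)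
      also have "\<dots> = M (c * t + s) i b" by (rule per)
      finally show ?case using Suc by simp
    qed
  qed
  define P where "P = {s. 0 < s \<and> 0 < M s i i}"
  have addP: "\<And>a b. a \<in> P \<Longrightarrow> b \<in> P \<Longrightarrow> a + b \<in> P"
  proof -
    fix a b assume a: "a \<in> P" and b: "b \<in> P"
    have "M a i i * M b i i \<le> (\<Sum>l<n. M a i l * M b l i)"
      using sum_ge_term[of n "\<lambda>l. M a i l * M b l i" i] Mnn i by auto
    also have "\<dots> = M (a + b) i i" unfolding M_def using mpow_add[OF i] by metis
    finally have "M a i i * M b i i \<le> M (a + b) i i" .
    moreover have "0 < M a i i * M b i i" using a b P_def by simp
    ultimately show "a + b \<in> P" using a P_def by simp
  qed
  have multP: "\<And>k d. d \<in> P \<Longrightarrow> 0 < k \<Longrightarrow> k * d \<in> P"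
  proof -
    fix k d assume d: "d \<in> P" show "0 < k \<Longrightarrow> k * d \<in> P"
    proof (induction k)
      case 0 then show ?case by simp
    next
      case (Suc k)
      show ?case
      proof (cases "k = 0")
        case True then show ?thesis using d by simp
      next
        case False
        then have "k * d \<in> P" using Suc by simp
        then have "d + k * d \<in> P" using addP d by blast
        then show ?thesis by simp
      qed
    qed
  qed
  have tP: "t \<in> P" using t Mtii P_def by simp
  define d where "d = (LEAST s. s \<in> P)"
  have dP: "d \<in> P" unfolding d_def using tP by (rule LeastI)
  have dpos: "0 < d" using dP P_def by simp
  have dvd: "\<forall>p\<in>P. d dvd p"
  proof
    fix p assume pP: "p \<in> P"
    show "d dvd p"
    proof (rule ccontr)
      assume nd: "\<not> d dvd p"
      define k where "k = p div d"
      define r where "r = p mod d"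
      have r0: "0 < r" using nd r_def by (simp add: dvd_eq_mod_eq_0)
      have rd: "r < d" using dpos r_def by simp
      have pe: "p = k * d + r" using k_def r_def by simp
      obtain t' where t': "t = Suc t'" using t by (cases t) auto
      define e where "e = p + k * t' * d"
      have eP: "e \<in> P"
      proof (cases "k * t' = 0")
        case True then have "e = p" using e_def by simp
        then show ?thesis using pP by simp
      next
        case False
        then have "(k * t') * d \<in> P" using multP dP by simp
        then show ?thesis using addP pP e_def by simp
      qed
      have "e = (k * d) * t + r" using pe e_def t' by (simp add: algebra_simps)
      then have "M e i i = M r i i" using perk by simp
      then have "r \<in> P" using eP r0 P_def by simp
      then have "d \<le> r" unfolding d_def by (rule Least_le)
      then show False using rd by simp
    qed
  qed
  have "P = {t. 0 < t \<and> 0 < mpow n T t i i}" using P_def M_def by simp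
  then have G: "Gcd P = 1" using ap i by (simp add: aperiodic_def)
  have "d dvd Gcd P" using dvd by (simp add: Gcd_greatest)
  then have d1: "d = 1" using G by simp
  have Tii: "0 < T i i" using dP d1 P_def M_def mpow_one[OF i] by simp
  have pw: "\<And>s b. b < n \<Longrightarrow> T i i ^ s * T i b \<le> M (Suc s) i b"
  proof -
    fix s b assume b: "b < n"
    show "T i i ^ s * T i b \<le> M (Suc s) i b"
    proof (induction s)
      case 0 then show ?case using mpow_one[OF b] M_def by simp
    next
      case (Suc s)
      have "T i i * M (Suc s) i b \<le> (\<Sum>l<n. T i l * M (Suc s) l b)"
        using sum_ge_term[of n "\<lambda>l. T i l * M (Suc s) l b" i] Mnn Tnn i by auto
      also have "\<dots> = M (Suc (Suc s)) i b" unfolding M_def by simp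
      finally have A: "T i i * M (Suc s) i b \<le> M (Suc (Suc s)) i b" .
      have "T i i ^ Suc s * T i b = T i i * (T i i ^ s * T i b)" by simp
      also have "\<dots> \<le> T i i * M (Suc s) i b" using Suc Tii by (intro mult_left_mono) auto
      finally show ?case using A by linarith
    qed
  qed
  have Tz: "\<And>b. b < n \<Longrightarrow> b \<noteq> i \<Longrightarrow> T i b = 0"
  proof -
    fix b assume b: "b < n" "b \<noteq> i"
    obtain t' where t': "t = Suc t'" using t by (cases t) auto
    have "T i i ^ t' * T i b \<le> 0" using pw[OF b(1), of t'] z[OF b] t' by simp
    moreover have "0 < T i i ^ t'" using Tii by simp
    moreover have "0 \<le> T i b" using Tnn b i by simp
    ultimately show "T i b = 0" by (meson mult_pos_pos order.not_eq_order_implies_strict not_le)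
  qed
  have zero: "\<And>s b. b < n \<Longrightarrow> b \<noteq> i \<Longrightarrow> M s i b = 0"
  proof -
    fix s b assume b: "b < n" "b \<noteq> i"
    show "M s i b = 0"
    proof (induction s)
      case 0 then show ?case using b M_def by simp
    next
      case (Suc s)
      have "M (Suc s) i b = (\<Sum>l<n. T i l * M s l b)" unfolding M_def by simp
      also have "\<dots> = (\<Sum>l<n. 0)" by (rule sum.cong[OF refl]) (metis Tz Suc lessThan_iff mult_zero_left mult_zero_right)
      finally show ?case by simp
    qed
  qed
  obtain s where "0 < mpow n T s i j0" using sc i ij by (auto simp: strongly_connected_def)
  then show False using zero[OF ij] M_def by simp
qed


lemma sum5: "(\<Sum>k<5. (g::nat\<Rightarrow>real) k) = g 0 + g 1 + g 2 + g 3 + (g 4 :: real)"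
  by (simp add: eval_nat_numeral)

lemma params_facts:
  assumes "params_ok xk f"
  shows "\<And>k. k < 5 \<Longrightarrow> 0 \<le> xk k \<and> xk k \<le> 1"
    and "\<And>k k'. k < 5 \<Longrightarrow> k' < 5 \<Longrightarrow> xk k = xk k' \<Longrightarrow> k = k'"
proof -
  fix k :: nat assume "k < 5"
  then have "k = 0 \<or> k = 1 \<or> k = 2 \<or> k = 3 \<or> k = 4" by auto
  then show "0 \<le> xk k \<and> xk k \<le> 1" using assms unfolding params_ok_def by auto
next
  fix k k' :: nat assume "k < 5" "k' < 5" "xk k = xk k'"
  moreover have "k = 0 \<or> k = 1 \<or> k = 2 \<or> k = 3 \<or> k = 4" using \<open>k<5\<close> by auto
  moreover have "k' = 0 \<or> k' = 1 \<or> k' = 2 \<or> k' = 3 \<or> k' = 4" using \<open>k'<5\<close> by auto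
  ultimately show "k = k'" using assms unfolding params_ok_def by auto
qed

lemma x0_decomp:
  assumes "params_ok xk f" "society xk f n x0" "j < n"
  shows "x0 j = (\<Sum>k<5. if x0 j = xk k then xk k else 0)"
proof -
  obtain k0 where k0: "k0 < 5" "x0 j = xk k0" using assms unfolding society_def by auto
  have "(\<Sum>k<5. if x0 j = xk k then xk k else 0) = (\<Sum>k<5. if k = k0 then xk k0 else 0)"
    by (rule sum.cong[OF refl]) (use k0 params_facts(2)[OF assms(1)] in auto)
  also have "\<dots> = xk k0" using k0 by simp
  finally show ?thesis using k0 by simp
qed

lemma belief_bound:
  assumes par: "params_ok xk f" and soc: "society xk f n x0" and mf: "mean_field eps n T x0 xk f"
    and rs: "row_stochastic n T" and i: "i < n" and eps: "0 \<le> eps"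
  shows "belief n T x0 t i \<le> mpow n T t i i * x0 i
           + (1 - mpow n T t i i) * ((\<Sum>k<5. xk k * f k) + 5 * eps)"
proof -
  define M where "M = mpow n T t"
  define m where "m = M i i"
  define W where "W k = (\<Sum>j\<in>{j. j < n \<and> j \<noteq> i \<and> x0 j = xk k}. M i j)" for k
  have Tnn: "\<forall>a<n. \<forall>b<n. 0 \<le> T a b" using rs by (simp add: row_stochastic_def)
  have Mnn: "\<And>b. 0 \<le> M i b" unfolding M_def using Tnn mpow_nonneg i by blast
  have rsum: "(\<Sum>b<n. M i b) = 1" unfolding M_def using rs mpow_rowsum i by blast
  have split: "(\<Sum>b<n. M i b) = M i i + (\<Sum>b\<in>{..<n}-{i}. M i b)"
    using i by (simp add: sum.remove)
  have "0 \<le> (\<Sum>b\<in>{..<n}-{i}. M i b)" using Mnn by (intro sum_nonneg) auto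
  then have m1: "m \<le> 1" using split rsum m_def by linarith
  have bsplit: "belief n T x0 t i = m * x0 i + (\<Sum>j\<in>{..<n}-{i}. M i j * x0 j)"
    unfolding belief_def M_def m_def using i by (simp add: sum.remove)
  have "(\<Sum>j\<in>{..<n}-{i}. M i j * x0 j)
      = (\<Sum>j\<in>{..<n}-{i}. M i j * (\<Sum>k<5. if x0 j = xk k then xk k else 0))"
    by (rule sum.cong[OF refl]) (use x0_decomp[OF par soc] in auto)
  also have "\<dots> = (\<Sum>j\<in>{..<n}-{i}. \<Sum>k<5. xk k * (if x0 j = xk k then M i j else 0))"
    by (rule sum.cong[OF refl], subst sum_distrib_left, rule sum.cong[OF refl], simp add: mult.commute)
  also have "\<dots> = (\<Sum>k<5. \<Sum>j\<in>{..<n}-{i}. xk k * (if x0 j = xk k then M i j else 0))"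
    by (rule sum.swap)
  also have "\<dots> = (\<Sum>k<5. xk k * W k)"
  proof (rule sum.cong[OF refl])
    fix k assume "k \<in> {..<5::nat}"
    have "(\<Sum>j\<in>{..<n}-{i}. xk k * (if x0 j = xk k then M i j else 0))
        = xk k * (\<Sum>j\<in>{..<n}-{i}. (if x0 j = xk k then M i j else 0))"
      by (simp add: sum_distrib_left)
    also have "(\<Sum>j\<in>{..<n}-{i}. (if x0 j = xk k then M i j else 0)) = W k"
    proof -
      have "(\<Sum>j\<in>{..<n}-{i}. (if x0 j = xk k then M i j else 0))
          = (\<Sum>j\<in>{j\<in>{..<n}-{i}. x0 j = xk k}. M i j)"
        by (rule sum.inter_filter[symmetric]) simp
      also have "{j\<in>{..<n}-{i}. x0 j = xk k} = {j. j < n \<and> j \<noteq> i \<and> x0 j = xk k}" by auto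
      finally show ?thesis unfolding W_def .
    qed
    finally show "(\<Sum>j\<in>{..<n}-{i}. xk k * (if x0 j = xk k then M i j else 0)) = xk k * W k" .
  qed
  also have "\<dots> \<le> (\<Sum>k<5. xk k * ((1 - m) * f k + eps * (1 - m)))"
  proof (rule sum_mono)
    fix k assume k: "k \<in> {..<5::nat}"
    have "\<bar>W k - (1 - m) * f k\<bar> \<le> eps * (1 - m)"
      using mf i k unfolding mean_field_def W_def m_def M_def by auto
    then have "W k \<le> (1 - m) * f k + eps * (1 - m)" by linarith
    moreover have "0 \<le> xk k" using params_facts(1)[OF par] k by auto
    ultimately show "xk k * W k \<le> xk k * ((1 - m) * f k + eps * (1 - m))"
      by (rule mult_left_mono)
  qed
  also have "\<dots> = (1 - m) * (\<Sum>k<5. xk k * f k) + eps * (1 - m) * (\<Sum>k<5. xk k)"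
    by (simp add: sum5 algebra_simps)
  also have "\<dots> \<le> (1 - m) * (\<Sum>k<5. xk k * f k) + eps * (1 - m) * 5"
  proof -
    have "(\<Sum>k<5. xk k) \<le> 5"
      using params_facts(1)[OF par, of 0] params_facts(1)[OF par, of 1] params_facts(1)[OF par, of 2]
        params_facts(1)[OF par, of 3] params_facts(1)[OF par, of 4] by (simp add: sum5)
    moreover have "0 \<le> eps * (1 - m)" using eps m1 by simp
    ultimately show ?thesis by (simp add: mult_left_mono)
  qed
  finally show ?thesis using bsplit unfolding m_def M_def by (simp add: algebra_simps)
qed


lemma rwp0: "R + U < L \<Longrightarrow> right_win_prob L R U = 0"
  unfolding right_win_prob_def by (intro sum.neutral) auto

lemma x0_range:
  assumes par: "params_ok xk f" and soc: "society xk f n x0" and i: "i < n"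
  shows "0 \<le> x0 i \<and> x0 i \<le> 1"
proof -
  obtain k where "k < 5" "x0 i = xk k" using soc i unfolding society_def by auto
  then show ?thesis using params_facts(1)[OF par] by auto
qed

lemma tstar0_eq:
  assumes par: "params_ok xk f" and soc: "society xk f n x0"
  shows "\<forall>a<n. \<forall>b<n. tstar n 0 x0 T a b = T a b"
proof (intro allI impI)
  fix a b assume a: "a < n" and b: "b < n"
  have ra: "0 \<le> x0 a \<and> x0 a \<le> 1" using x0_range[OF par soc a] .
  have nl: "\<And>l. l < n \<Longrightarrow> \<not> \<bar>x0 a - x0 l\<bar> > 1"
    using ra x0_range[OF par soc] by (simp add: abs_if) (smt (verit))
  then have e: "{l. l < n \<and> l \<noteq> a \<and> \<bar>x0 a - x0 l\<bar> > 1} = {}" by blast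
  show "tstar n 0 x0 T a b = T a b"
  proof (cases "a = b")
    case True
    have "tstar n 0 x0 T a b = T a a + (\<Sum>l\<in>{l. l < n \<and> l \<noteq> a \<and> \<bar>x0 a - x0 l\<bar> > 1}. T a l)"
      unfolding tstar_def True by simp
    also have "\<dots> = T a a" unfolding e by simp
    finally show ?thesis using True by simp
  next
    case False then show ?thesis unfolding tstar_def using nl[OF b] by simp
  qed
qed

lemma card_type_pos:
  assumes par: "params_ok xk f" and soc: "society xk f n x0" and n: "0 < n" and k: "k < 5"
  shows "\<exists>i. i < n \<and> x0 i = xk k"
proof -
  have "0 < f k" using par k unfolding params_ok_def by auto
  then have "0 < real (card {i. i < n \<and> x0 i = xk k})" using soc k n unfolding society_def by simp
  then have "{i. i < n \<and> x0 i = xk k} \<noteq> {}" by (metis card.empty of_nat_0 less_irrefl)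
  then show ?thesis by auto
qed

lemma part2:
  assumes par: "params_ok xk f"
  shows "\<exists>eps > 0. \<forall>n T x0.
              row_stochastic n T \<and> strongly_connected n T \<and> aperiodic n T \<and>
              society xk f n x0 \<and> mean_field eps n T x0 xk f \<and> wise C n T \<and>
              strongly_connected n (tstar n 0 x0 T)
              \<longrightarrow> (\<forall>t > 0. prob_right_wins n (belief n (tstar n 0 x0 T) x0 t) = 0)"
proof -
  define mu where "mu = (\<Sum>k<5. xk k * f k)"
  have mu: "mu < 1/2" using par unfolding params_ok_def mu_def by simp
  define eps where "eps = (1/2 - mu) / 10"
  have eps: "0 < eps" using mu eps_def by simp
  have key: "prob_right_wins n (belief n (tstar n 0 x0 T) x0 t) = 0"
    if rs: "row_stochastic n T" and sc: "strongly_connected n T" and ap: "aperiodic n T"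
      and soc: "society xk f n x0" and mf: "mean_field eps n T x0 xk f" and w: "wise C n T"
      and t: "0 < t" for n T x0 t
  proof -
    have n: "0 < n"
    proof (rule ccontr)
      assume "\<not> 0 < n"
      then have "n = 0" by simp
      then show False using w unfolding wise_def influence_def by simp
    qed
    obtain a where a: "a < n" "x0 a = xk 0" using card_type_pos[OF par soc n, of 0] by auto
    obtain b where b: "b < n" "x0 b = xk 1" using card_type_pos[OF par soc n, of 1] by auto
    have ab: "a \<noteq> b" using a b par unfolding params_ok_def by auto
    define B where "B = belief n (tstar n 0 x0 T) x0 t"
    have Beq: "B i = belief n T x0 t i" if i: "i < n" for i
    proof -
      have "\<And>j. mpow n (tstar n 0 x0 T) t i j = mpow n T t i j"
        using mpow_cong[OF tstar0_eq[OF par soc] i] by blast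
      then show ?thesis unfolding B_def belief_def by simp
    qed
    have left: "B i < 1/2" if i: "i < n" and xi: "x0 i \<le> 1/2" for i
    proof -
      define m where "m = mpow n T t i i"
      obtain j0 where j0: "j0 < n" "j0 \<noteq> i" using a b ab by metis
      have m1: "m < 1" unfolding m_def by (rule diag_lt1[OF rs sc ap j0 i t])
      have m0: "0 \<le> m" unfolding m_def using rs mpow_nonneg i by (simp add: row_stochastic_def)
      have bb: "belief n T x0 t i \<le> m * x0 i + (1 - m) * (mu + 5 * eps)"
        using belief_bound[OF par soc mf rs i] eps unfolding m_def mu_def by simp
      have "m * x0 i \<le> m * (1/2)" using xi m0 by (rule mult_left_mono)
      moreover have "(1 - m) * (mu + 5 * eps) < (1 - m) * (1/2)"
        using m1 mu eps_def by (intro mult_strict_left_mono) auto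
      moreover have "m * (1/2) + (1 - m) * (1/2) = (1/2::real)" by (simp add: field_simps)
      ultimately have "belief n T x0 t i < 1/2" using bb by linarith
      then show ?thesis using Beq i by simp
    qed
    define SL where "SL = {i. i < n \<and> B i < 1/2}"
    define SR where "SR = {i. i < n \<and> B i > 1/2}"
    define SU where "SU = {i. i < n \<and> B i = 1/2}"
    define Ty where "Ty k = {i. i < n \<and> x0 i = xk k}" for k
    have cTy: "real (card (Ty k)) = f k * real n" if "k < 5" for k
      using soc that unfolding society_def Ty_def by blast
    have finTy: "finite (Ty k)" for k unfolding Ty_def by simp
    have "Ty 0 \<union> Ty 1 \<subseteq> SL"
      using left par unfolding Ty_def SL_def params_ok_def by auto
    then have "card (Ty 0 \<union> Ty 1) \<le> card SL" by (intro card_mono) (auto simp: SL_def)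
    moreover have "card (Ty 0 \<union> Ty 1) = card (Ty 0) + card (Ty 1)"
      using par finTy unfolding Ty_def params_ok_def by (intro card_Un_disjoint) auto
    ultimately have L: "(f 0 + f 1) * real n \<le> real (card SL)"
      using cTy[of 0] cTy[of 1] by (simp add: algebra_simps)
    have "SR \<union> SU \<subseteq> Ty 3 \<union> Ty 4"
    proof
      fix i assume "i \<in> SR \<union> SU"
      then have i: "i < n" and Bi: "\<not> B i < 1/2" unfolding SR_def SU_def by auto
      then have xi: "x0 i > 1/2" using left by force
      obtain k where k: "k < 5" "x0 i = xk k" using soc i unfolding society_def by auto
      have "k = 0 \<or> k = 1 \<or> k = 2 \<or> k = 3 \<or> k = 4" using k by auto
      moreover have "xk 0 \<le> 1/2" "xk 1 \<le> 1/2" "xk 2 \<le> 1/2" using par unfolding params_ok_def by auto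
      ultimately have "k = 3 \<or> k = 4" using xi k by auto
      then show "i \<in> Ty 3 \<union> Ty 4" using i k unfolding Ty_def by auto
    qed
    then have "card (SR \<union> SU) \<le> card (Ty 3 \<union> Ty 4)" by (intro card_mono) (auto simp: finTy)
    also have "\<dots> \<le> card (Ty 3) + card (Ty 4)" by (rule card_Un_le)
    finally have "card SR + card SU \<le> card (Ty 3) + card (Ty 4)"
      by (subst card_Un_disjoint[symmetric]) (auto simp: SR_def SU_def)
    then have RU: "real (card SR + card SU) \<le> (f 3 + f 4) * real n"
      using cTy[of 3] cTy[of 4] by (simp add: algebra_simps)
    have "(f 3 + f 4) * real n < (f 0 + f 1) * real n"
      using par n unfolding params_ok_def by (intro mult_strict_right_mono) auto
    then have "card SR + card SU < card SL" using L RU by linarith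
    then show ?thesis unfolding prob_right_wins_def left_votes_def right_votes_def indiff_votes_def
      B_def[symmetric] SL_def[symmetric] SR_def[symmetric] SU_def[symmetric]
      by (intro rwp0)
  qed
  show ?thesis using eps key by blast
qed



definition XK :: "nat \<Rightarrow> real" where
  "XK k = (if k = 0 then 0 else if k = 1 then 3/10 else if k = 2 then 1/2 else if k = 3 then 3/4 else 1)"
definition FF :: "nat \<Rightarrow> real" where
  "FF k = (if k = 0 then 1/4 else if k = 1 then 1/10 else if k = 2 then 7/20 else 3/20)"
definition tyf :: "nat \<Rightarrow> nat \<Rightarrow> nat" where
  "tyf m i = (if i < 5*m then 0 else if i < 7*m then 1 else if i < 14*m then 2 else if i < 17*m then 3 else 4)"
definition X0 :: "nat \<Rightarrow> nat \<Rightarrow> real" where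
  "X0 m i = XK (tyf m i)"
definition TU :: "nat \<Rightarrow> nat \<Rightarrow> nat \<Rightarrow> real" where
  "TU n i j = 1 / real n"

lemma params_XK: "params_ok XK FF"
  unfolding params_ok_def by (simp add: sum5 XK_def FF_def)

lemma tyf_lt5: "tyf m i < 5" unfolding tyf_def by auto

lemma card_tyf: assumes "k < 5" shows "real (card {i. i < 20*m \<and> tyf m i = k}) = FF k * real (20*m)"
proof -
  have "k = 0 \<or> k = 1 \<or> k = 2 \<or> k = 3 \<or> k = 4" using assms by auto
  moreover have "{i. i < 20*m \<and> tyf m i = 0} = {..<5*m}" by (auto simp: tyf_def)
  moreover have "{i. i < 20*m \<and> tyf m i = 1} = {5*m..<7*m}" by (auto simp: tyf_def)
  moreover have "{i. i < 20*m \<and> tyf m i = 2} = {7*m..<14*m}" by (auto simp: tyf_def)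
  moreover have "{i. i < 20*m \<and> tyf m i = 3} = {14*m..<17*m}" by (auto simp: tyf_def)
  moreover have "{i. i < 20*m \<and> tyf m i = 4} = {17*m..<20*m}" by (auto simp: tyf_def)
  ultimately show ?thesis by (auto simp: FF_def)
qed

lemma X0_eq_iff: "k < 5 \<Longrightarrow> (X0 m i = XK k) = (tyf m i = k)"
  using params_facts(2)[OF params_XK] tyf_lt5 unfolding X0_def by metis

lemma society_X0: "society XK FF (20*m) (X0 m)"
proof -
  have "\<And>k. k < 5 \<Longrightarrow> {i. i < 20*m \<and> X0 m i = XK k} = {i. i < 20*m \<and> tyf m i = k}"
    using X0_eq_iff by auto
  moreover have "\<forall>i<20*m. \<exists>k<5. X0 m i = XK k" using tyf_lt5 X0_def by blast
  ultimately show ?thesis unfolding society_def using card_tyf by auto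
qed

lemma fiber_sum:
  fixes n :: nat
  assumes "\<forall>j<n. ty j < (K::nat)"
  shows "(\<Sum>j<n. (g::nat \<Rightarrow> real) (ty j)) = (\<Sum>k<K. g k * real (card {j. j < n \<and> ty j = k}))"
proof -
  have "(\<Sum>j<n. g (ty j)) = (\<Sum>j<n. \<Sum>k<K. if ty j = k then g k else 0)"
    by (rule sum.cong[OF refl]) (use assms in auto)
  also have "\<dots> = (\<Sum>k<K. \<Sum>j<n. if ty j = k then g k else 0)" by (rule sum.swap)
  also have "\<dots> = (\<Sum>k<K. g k * real (card {j. j < n \<and> ty j = k}))"
  proof (rule sum.cong[OF refl])
    fix k
    have "(\<Sum>j<n. if ty j = k then g k else 0) = (\<Sum>j\<in>{j\<in>{..<n}. ty j = k}. g k)"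
      by (rule sum.inter_filter[symmetric]) simp
    also have "{j\<in>{..<n}. ty j = k} = {j. j < n \<and> ty j = k}" by auto
    finally show "(\<Sum>j<n. if ty j = k then g k else 0) = g k * real (card {j. j < n \<and> ty j = k})"
      by simp
  qed
  finally show ?thesis .
qed


lemma rs_TU: "0 < n \<Longrightarrow> row_stochastic n (TU n)"
  unfolding row_stochastic_def TU_def by simp

lemma mpow_TU: assumes "j < n" shows "mpow n (TU n) (Suc t) i j = 1 / real n"
  using assms
proof (induction t arbitrary: i)
  case 0
  have "(\<Sum>l<n. (if l = j then 1 else 0) / real n) = (\<Sum>l<n. if l = j then 1 / real n else 0)"
    by (rule sum.cong) auto
  then show ?case using 0 by (simp add: TU_def)
next
  case (Suc t)
  have "mpow n (TU n) (Suc (Suc t)) i j = (\<Sum>l<n. TU n i l * (1 / real n))"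
    using Suc by simp
  also have "\<dots> = 1 / real n" using assms by (simp add: TU_def)
  finally show ?case .
qed

lemma sc_TU: "0 < n \<Longrightarrow> strongly_connected n (TU n)"
  unfolding strongly_connected_def using mpow_TU by (metis of_nat_0_less_iff divide_pos_pos zero_less_one)

lemma ap_TU: assumes "0 < n" shows "aperiodic n (TU n)"
  unfolding aperiodic_def
proof (intro allI impI)
  fix i assume i: "i < n"
  have "1 \<in> {t. 0 < t \<and> 0 < mpow n (TU n) t i i}" using mpow_TU[OF i, of 0 i] assms by simp
  then have "Gcd {t. 0 < t \<and> 0 < mpow n (TU n) t i i} dvd 1" by (rule Gcd_dvd)
  then show "Gcd {t. 0 < t \<and> 0 < mpow n (TU n) t i i} = 1" by simp
qed

lemma wise_TU: assumes "0 < n" shows "wise 1 n (TU n)"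
  unfolding wise_def influence_def
  by (rule exI[of _ "\<lambda>_. 1 / real n"]) (use assms in \<open>simp add: TU_def\<close>)

lemma mf_arith:
  fixes N F d c eps :: real
  assumes "0 < N" "c = F * N - d" "0 < F" "F < 1" "d = 0 \<or> d = 1" "1 \<le> eps * (N - 1)"
  shows "\<bar>c * (1 / N) - (1 - 1 / N) * F\<bar> \<le> eps * (1 - 1 / N)"
proof -
  have e1: "c * (1 / N) - (1 - 1 / N) * F = (F - d) / N" using assms(1,2) by (simp add: field_simps)
  have "\<bar>F - d\<bar> \<le> 1" using assms(3,4,5) by auto
  then have "\<bar>(F - d) / N\<bar> \<le> 1 / N" using assms(1) by (simp add: abs_div divide_right_mono)
  also have "1 / N \<le> eps * (N - 1) / N" using assms(1,6) by (simp add: divide_right_mono)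
  also have "eps * (N - 1) / N = eps * (1 - 1 / N)" using assms(1) by (simp add: field_simps)
  finally show ?thesis using e1 by simp
qed

lemma mf_TU:
  assumes m: "0 < m" and e: "1 \<le> eps * (real (20*m) - 1)"
  shows "mean_field eps (20*m) (TU (20*m)) (X0 m) XK FF"
  unfolding mean_field_def
proof (intro allI impI)
  fix t i k assume i: "i < 20*m" and k: "k < (5::nat)"
  define n where "n = 20*m"
  have n: "0 < n" using m n_def by simp
  define S where "S = {j. j < n \<and> j \<noteq> i \<and> X0 m j = XK k}"
  define Ty where "Ty = {j. j < n \<and> tyf m j = k}"
  have SD: "S = Ty - {i}" unfolding S_def Ty_def using X0_eq_iff[OF k] by auto
  have cTy: "real (card Ty) = FF k * real n" unfolding Ty_def n_def using card_tyf[OF k] by simp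
  define d where "d = (if tyf m i = k then 1 else (0::real))"
  have cS: "real (card S) = FF k * real n - d"
  proof (cases "tyf m i = k")
    case True
    then have "i \<in> Ty" using i n_def Ty_def by simp
    then have "card S = card Ty - 1" using SD by (simp add: Ty_def)
    moreover have "card Ty \<ge> 1" using \<open>i \<in> Ty\<close> by (metis One_nat_def Suc_leI card_gt_0_iff empty_iff finite_Collect_conjI finite_lessThan lessThan_def Ty_def mem_Collect_eq)
    ultimately show ?thesis using cTy True d_def by (simp add: of_nat_diff)
  next
    case False
    then have "i \<notin> Ty" using Ty_def by simp
    then have "S = Ty" using SD by simp
    then show ?thesis using cTy False d_def by simp
  qed
  have F: "0 < FF k" "FF k < 1" using params_XK k unfolding params_ok_def by auto
  show "\<bar>(\<Sum>j\<in>{j. j < 20*m \<and> j \<noteq> i \<and> X0 m j = XK k}. mpow (20*m) (TU (20*m)) t i j)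
          - (1 - mpow (20*m) (TU (20*m)) t i i) * FF k\<bar>
        \<le> eps * (1 - mpow (20*m) (TU (20*m)) t i i)"
  proof (cases t)
    case 0
    have "(\<Sum>j\<in>{j. j < 20*m \<and> j \<noteq> i \<and> X0 m j = XK k}. mpow (20*m) (TU (20*m)) t i j) = 0"
      using 0 by (intro sum.neutral) auto
    then show ?thesis using 0 by simp
  next
    case (Suc t')
    have "(\<Sum>j\<in>S. mpow n (TU n) t i j) = (\<Sum>j\<in>S. 1 / real n)"
      using Suc mpow_TU unfolding S_def by (intro sum.cong) auto
    also have "\<dots> = real (card S) * (1 / real n)" by simp
    finally have sS: "(\<Sum>j\<in>S. mpow n (TU n) t i j) = real (card S) * (1 / real n)" .
    have mii: "mpow n (TU n) t i i = 1 / real n" using Suc mpow_TU i n_def by simp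
    have "\<bar>real (card S) * (1 / real n) - (1 - 1 / real n) * FF k\<bar> \<le> eps * (1 - 1 / real n)"
      by (rule mf_arith[OF _ cS F]) (use n e n_def d_def in auto)
    then show ?thesis using sS mii unfolding S_def n_def by simp
  qed
qed


lemma tstar_apply:
  assumes i: "i < n"
  shows "(\<Sum>j<n. tstar n q x0 T i j * y j)
       = (\<Sum>j<n. T i j * (if j \<noteq> i \<and> \<bar>x0 i - x0 j\<bar> > 1 - q then y i else y j))"
proof -
  define F where "F = {l. l < n \<and> l \<noteq> i \<and> \<bar>x0 i - x0 l\<bar> > 1 - q}"
  define R where "R = {..<n} - {i}"
  have FR: "F = {j\<in>R. \<bar>x0 i - x0 j\<bar> > 1 - q}" unfolding F_def R_def by auto
  have "(\<Sum>j<n. tstar n q x0 T i j * y j) = tstar n q x0 T i i * y i + (\<Sum>j\<in>R. tstar n q x0 T i j * y j)"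
    unfolding R_def using i by (simp add: sum.remove)
  also have "tstar n q x0 T i i = T i i + (\<Sum>l\<in>F. T i l)" unfolding tstar_def F_def by simp
  also have "(\<Sum>j\<in>R. tstar n q x0 T i j * y j) = (\<Sum>j\<in>R. if \<bar>x0 i - x0 j\<bar> > 1 - q then 0 else T i j * y j)"
    by (rule sum.cong[OF refl]) (auto simp: R_def tstar_def)
  finally have L: "(\<Sum>j<n. tstar n q x0 T i j * y j) = (T i i + (\<Sum>l\<in>F. T i l)) * y i
     + (\<Sum>j\<in>R. if \<bar>x0 i - x0 j\<bar> > 1 - q then 0 else T i j * y j)" .
  have "(\<Sum>j<n. T i j * (if j \<noteq> i \<and> \<bar>x0 i - x0 j\<bar> > 1 - q then y i else y j))
      = T i i * y i + (\<Sum>j\<in>R. T i j * (if j \<noteq> i \<and> \<bar>x0 i - x0 j\<bar> > 1 - q then y i else y j))"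
    unfolding R_def using i by (simp add: sum.remove)
  also have "(\<Sum>j\<in>R. T i j * (if j \<noteq> i \<and> \<bar>x0 i - x0 j\<bar> > 1 - q then y i else y j))
      = (\<Sum>j\<in>R. (if \<bar>x0 i - x0 j\<bar> > 1 - q then T i j * y i else 0)
             + (if \<bar>x0 i - x0 j\<bar> > 1 - q then 0 else T i j * y j))"
    by (rule sum.cong[OF refl]) (auto simp: R_def)
  also have "\<dots> = (\<Sum>j\<in>R. if \<bar>x0 i - x0 j\<bar> > 1 - q then T i j * y i else 0)
             + (\<Sum>j\<in>R. if \<bar>x0 i - x0 j\<bar> > 1 - q then 0 else T i j * y j)"
    by (rule sum.distrib)
  also have "(\<Sum>j\<in>R. if \<bar>x0 i - x0 j\<bar> > 1 - q then T i j * y i else 0) = (\<Sum>j\<in>F. T i j * y i)"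
    unfolding FR by (rule sum.inter_filter[symmetric]) (simp add: R_def)
  also have "\<dots> = (\<Sum>j\<in>F. T i j) * y i" by (simp add: sum_distrib_right)
  finally show ?thesis using L by (simp add: algebra_simps)
qed

lemma pos_step:
  assumes nn: "\<forall>a<n. \<forall>b<n. 0 \<le> A a b" and i: "i < n" and l: "l < n"
    and p1: "0 < A i l" and p2: "0 < mpow n A t l j"
  shows "0 < mpow n A (Suc t) i j"
proof -
  have "0 < A i l * mpow n A t l j" using p1 p2 by simp
  also have "\<dots> \<le> (\<Sum>l'<n. A i l' * mpow n A t l' j)"
    using sum_ge_term[of n "\<lambda>l'. A i l' * mpow n A t l' j" l] nn i l mpow_nonneg[OF nn] by auto
  finally show ?thesis by simp
qed

definition TS :: "nat \<Rightarrow> nat \<Rightarrow> nat \<Rightarrow> real" where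
  "TS m = tstar (20*m) (13/20) (X0 m) (TU (20*m))"

lemma TS_off: "a \<noteq> b \<Longrightarrow> TS m a b = (if \<bar>X0 m a - X0 m b\<bar> > 7/20 then 0 else 1 / real (20*m))"
  unfolding TS_def tstar_def TU_def by simp

lemma TS_diag: "1 / real (20*m) \<le> TS m a a"
  unfolding TS_def tstar_def TU_def by (simp add: sum_nonneg)

lemma TS_nonneg: "0 \<le> TS m a b"
  using TS_diag[of m a] TS_off[of a b m] by (cases "a = b") (auto simp: order_trans[OF _ TS_diag])

lemma TS_adj:
  assumes m: "0 < m" and d: "tyf m a \<le> tyf m b + 1" "tyf m b \<le> tyf m a + 1"
  shows "0 < TS m a b"
proof (cases "a = b")
  case True
  have p: "0 < 1 / real (20*m)" using m by simp
  show ?thesis using True less_le_trans[OF p TS_diag[of m a]] by simp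
next
  case False
  have ta: "tyf m a < 5" "tyf m b < 5" by (rule tyf_lt5)+
  have "\<not> \<bar>X0 m a - X0 m b\<bar> > 7/20"
  proof -
    have A: "tyf m a = 0 \<or> tyf m a = 1 \<or> tyf m a = 2 \<or> tyf m a = 3 \<or> tyf m a = 4" using ta by auto
    have B: "tyf m b = 0 \<or> tyf m b = 1 \<or> tyf m b = 2 \<or> tyf m b = 3 \<or> tyf m b = 4" using ta by auto
    show ?thesis using A B d unfolding X0_def XK_def by auto
  qed
  then show ?thesis using TS_off[OF False, of m] m by simp
qed

lemma ex_tyf: assumes "0 < m" "k < 5" shows "\<exists>l < 20*m. tyf m l = k"
  using card_type_pos[OF params_XK society_X0, of m k] assms X0_eq_iff by auto

lemma sc_TS: assumes m: "0 < m" shows "strongly_connected (20*m) (TS m)"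
proof -
  define n where "n = 20*m"
  have nn: "\<forall>a<n. \<forall>b<n. 0 \<le> TS m a b" using TS_nonneg by simp
  have main: "\<forall>i j. i < n \<longrightarrow> j < n \<longrightarrow> (tyf m i + d = tyf m j \<or> tyf m j + d = tyf m i)
        \<longrightarrow> (\<exists>t. 0 < mpow n (TS m) t i j)" for d
  proof (induction d)
    case 0
    show ?case
    proof (intro allI impI)
      fix i j assume i: "i < n" and j: "j < n" and "tyf m i + 0 = tyf m j \<or> tyf m j + 0 = tyf m i"
      then have "tyf m i = tyf m j" by auto
      then have "0 < TS m i j" using TS_adj[OF m, of i j] by simp
      then have "0 < mpow n (TS m) 1 i j" using mpow_one[OF j] by simp
      then show "\<exists>t. 0 < mpow n (TS m) t i j" by blast
    qed
  next
    case (Suc d)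
    show ?case
    proof (intro allI impI)
      fix i j assume i: "i < n" and j: "j < n" and h: "tyf m i + Suc d = tyf m j \<or> tyf m j + Suc d = tyf m i"
      show "\<exists>t. 0 < mpow n (TS m) t i j"
      proof (cases "tyf m i + Suc d = tyf m j")
        case True
        have "tyf m i + 1 < 5" using True tyf_lt5[of m j] by simp
        then obtain l where l: "l < n" "tyf m l = tyf m i + 1" using ex_tyf[OF m] n_def by blast
        have "tyf m l + d = tyf m j" using l True by simp
        then obtain t where "0 < mpow n (TS m) t l j" using Suc.IH l j by blast
        moreover have "0 < TS m i l" using TS_adj[OF m] l by simp
        ultimately show ?thesis using pos_step[OF nn i l(1)] by blast
      next
        case False
        then have F: "tyf m j + Suc d = tyf m i" using h by simp
        have "tyf m i - 1 < 5" using tyf_lt5[of m i] by simp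
        then obtain l where l: "l < n" "tyf m l = tyf m i - 1" using ex_tyf[OF m] n_def by blast
        have "tyf m j + d = tyf m l" using l F by simp
        then obtain t where "0 < mpow n (TS m) t l j" using Suc.IH l j by blast
        moreover have "0 < TS m i l" using TS_adj[OF m] l F by simp
        ultimately show ?thesis using pos_step[OF nn i l(1)] by blast
      qed
    qed
  qed
  show ?thesis unfolding strongly_connected_def n_def[symmetric]
  proof (intro allI impI)
    fix i j assume "i < n" "j < n"
    moreover have "tyf m i + (tyf m j - tyf m i) = tyf m j \<or> tyf m j + (tyf m i - tyf m j) = tyf m i"
      by auto
    ultimately show "\<exists>t. 0 < mpow n (TS m) t i j" using main by blast
  qed
qed


definition Z :: "nat \<Rightarrow> nat \<Rightarrow> real" where
  "Z a k = (if \<bar>XK a - XK k\<bar> > 7/20 then XK a else XK k)"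

lemma belief1:
  assumes m: "0 < m" and i: "i < 20*m"
  shows "belief (20*m) (TS m) (X0 m) 1 i = (\<Sum>k<5. Z (tyf m i) k * FF k)"
proof -
  define n where "n = 20*m"
  have n: "0 < real n" using m n_def by simp
  have "belief n (TS m) (X0 m) 1 i = (\<Sum>j<n. TS m i j * X0 m j)"
    unfolding belief_def by (rule sum.cong[OF refl]) (metis lessThan_iff mpow_one)
  also have "\<dots> = (\<Sum>j<n. TU n i j * (if j \<noteq> i \<and> \<bar>X0 m i - X0 m j\<bar> > 1 - 13/20 then X0 m i else X0 m j))"
    unfolding TS_def n_def by (rule tstar_apply) (use i in simp)
  also have "\<dots> = (\<Sum>j<n. (1 / real n) * Z (tyf m i) (tyf m j))"
    by (rule sum.cong[OF refl]) (auto simp: TU_def Z_def X0_def)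
  also have "\<dots> = (1 / real n) * (\<Sum>j<n. Z (tyf m i) (tyf m j))" by (simp add: sum_distrib_left)
  also have "(\<Sum>j<n. Z (tyf m i) (tyf m j)) = (\<Sum>k<5. Z (tyf m i) k * real (card {j. j < n \<and> tyf m j = k}))"
    by (rule fiber_sum) (simp add: tyf_lt5)
  also have "\<dots> = (\<Sum>k<5. Z (tyf m i) k * (FF k * real n))"
    by (rule sum.cong[OF refl]) (simp add: card_tyf n_def)
  also have "\<dots> = real n * (\<Sum>k<5. Z (tyf m i) k * FF k)"
    by (simp add: sum_distrib_left algebra_simps)
  finally show ?thesis using n n_def by simp
qed

lemma Zsum: "2 \<le> a \<Longrightarrow> a < 5 \<Longrightarrow> 1/2 < (\<Sum>k<5. Z a k * FF k)"
proof -
  assume "2 \<le> a" "a < 5"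
  then have "a = 2 \<or> a = 3 \<or> a = 4" by auto
  then show ?thesis by (auto simp: sum5 Z_def XK_def FF_def)
qed

lemma rwp1: "L + U < R \<Longrightarrow> right_win_prob L R U = 1"
proof -
  assume h: "L + U < R"
  have "right_win_prob L R U = (\<Sum>k\<le>U. real (U choose k) / 2 ^ U)"
    unfolding right_win_prob_def by (rule sum.cong[OF refl]) (use h in auto)
  also have "\<dots> = (\<Sum>k\<le>U. real (U choose k)) / 2 ^ U" by (simp add: sum_divide_distrib)
  also have "(\<Sum>k\<le>U. real (U choose k)) = 2 ^ U"
    using choose_row_sum[of U] by (metis of_nat_numeral of_nat_power of_nat_sum)
  finally show ?thesis by simp
qed

lemma win1:
  assumes m: "0 < m"
  shows "prob_right_wins (20*m) (belief (20*m) (TS m) (X0 m) 1) = 1"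
proof -
  define n where "n = 20*m"
  define B where "B = belief n (TS m) (X0 m) 1"
  define SL where "SL = {i. i < n \<and> B i < 1/2}"
  define SR where "SR = {i. i < n \<and> B i > 1/2}"
  define SU where "SU = {i. i < n \<and> B i = 1/2}"
  have "{7*m..<20*m} \<subseteq> SR"
  proof
    fix i assume "i \<in> {7*m..<20*m}"
    then have i: "i < n" and ty: "2 \<le> tyf m i" unfolding n_def tyf_def by auto
    have "B i > 1/2" unfolding B_def n_def using belief1[OF m] i n_def Zsum[OF ty tyf_lt5] by simp
    then show "i \<in> SR" unfolding SR_def using i by simp
  qed
  then have R: "13 * m \<le> card SR" using card_mono[of SR "{7*m..<20*m}"] unfolding SR_def by auto
  have "SL \<union> SU \<subseteq> {..<n} - SR" unfolding SL_def SU_def SR_def by auto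
  then have "card (SL \<union> SU) \<le> card ({..<n} - SR)" by (intro card_mono) auto
  also have "\<dots> = n - card SR" by (subst card_Diff_subset) (auto simp: SR_def)
  finally have "card SL + card SU \<le> n - card SR"
    by (subst card_Un_disjoint[symmetric]) (auto simp: SL_def SU_def)
  then have "card SL + card SU < card SR" using R m n_def by linarith
  then show ?thesis unfolding prob_right_wins_def left_votes_def right_votes_def indiff_votes_def
      n_def[symmetric] B_def[symmetric] SL_def[symmetric] SR_def[symmetric] SU_def[symmetric]
    by (intro rwp1)
qed


lemma eps_cond:
  assumes e: "0 < eps" and m: "m = N + nat \<lceil>1/eps\<rceil> + 1"
  shows "1 \<le> eps * (real (20*m) - 1)"
proof -
  have "1/eps \<le> real (nat \<lceil>1/eps\<rceil>)" by linarith
  also have "\<dots> \<le> real m" using m by simp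
  also have "real m \<le> real (20*m) - 1" using m by simp
  finally have "1/eps \<le> real (20*m) - 1" .
  then have "eps * (1/eps) \<le> eps * (real (20*m) - 1)" using e by (intro mult_left_mono) auto
  then show ?thesis using e by simp
qed

lemma part1:
  "\<exists>xk f q C. params_ok xk f \<and> 0 < q \<and> q \<le> 1 \<and> 0 < C \<and>
           (\<forall>eps > 0. \<forall>N. \<exists>n T x0. N \<le> n \<and>
              row_stochastic n T \<and> strongly_connected n T \<and> aperiodic n T \<and>
              society xk f n x0 \<and> mean_field eps n T x0 xk f \<and> wise C n T \<and>
              strongly_connected n (tstar n q x0 T) \<and>
              (\<exists>t > 0. prob_right_wins n (belief n (tstar n q x0 T) x0 t) = 1))"
proof (rule exI[of _ XK], rule exI[of _ FF], rule exI[of _ "13/20"], rule exI[of _ 1], intro conjI allI impI)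
  show "params_ok XK FF" by (rule params_XK)
  show "0 < (13/20::real)" by simp
  show "(13/20::real) \<le> 1" by simp
  show "0 < (1::real)" by simp
  fix eps :: real and N :: nat assume e: "0 < eps"
  define m where "m = N + nat \<lceil>1/eps\<rceil> + 1"
  have m0: "0 < m" using m_def by simp
  have n0: "0 < 20*m" using m0 by simp
  have ts: "tstar (20*m) (13/20) (X0 m) (TU (20*m)) = TS m" unfolding TS_def by simp
  show "\<exists>n T x0. N \<le> n \<and>
              row_stochastic n T \<and> strongly_connected n T \<and> aperiodic n T \<and>
              society XK FF n x0 \<and> mean_field eps n T x0 XK FF \<and> wise 1 n T \<and>
              strongly_connected n (tstar n (13/20) x0 T) \<and>
              (\<exists>t > 0. prob_right_wins n (belief n (tstar n (13/20) x0 T) x0 t) = 1)"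
  proof -
    have A1: "N \<le> 20*m" using m_def by simp
    have A2: "row_stochastic (20*m) (TU (20*m))" using rs_TU n0 by blast
    have A3: "strongly_connected (20*m) (TU (20*m))" using sc_TU n0 by blast
    have A4: "aperiodic (20*m) (TU (20*m))" using ap_TU n0 by blast
    have A5: "society XK FF (20*m) (X0 m)" by (rule society_X0)
    have A6: "mean_field eps (20*m) (TU (20*m)) (X0 m) XK FF"
      using mf_TU[OF m0 eps_cond[OF e m_def]] .
    have A7: "wise 1 (20*m) (TU (20*m))" using wise_TU n0 by blast
    have A8: "strongly_connected (20*m) (tstar (20*m) (13/20) (X0 m) (TU (20*m)))"
      unfolding ts by (rule sc_TS[OF m0])
    have A9: "prob_right_wins (20*m) (belief (20*m) (tstar (20*m) (13/20) (X0 m) (TU (20*m))) (X0 m) 1) = 1"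
      unfolding ts using win1[OF m0] by simp
    show ?thesis using A1 A2 A3 A4 A5 A6 A7 A8 A9 zero_less_one by blast
  qed
qed

theorem proposition4:
  shows "(\<exists>xk f q C. params_ok xk f \<and> 0 < q \<and> q \<le> 1 \<and> 0 < C \<and>
           (\<forall>eps > 0. \<forall>N. \<exists>n T x0. N \<le> n \<and>
              row_stochastic n T \<and> strongly_connected n T \<and> aperiodic n T \<and>
              society xk f n x0 \<and> mean_field eps n T x0 xk f \<and> wise C n T \<and>
              strongly_connected n (tstar n q x0 T) \<and>
              (\<exists>t > 0. prob_right_wins n (belief n (tstar n q x0 T) x0 t) = 1)))
       \<and>
       (\<forall>xk f C. params_ok xk f \<longrightarrow> 0 < C \<longrightarrow>
           (\<exists>eps > 0. \<forall>n T x0.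
              row_stochastic n T \<and> strongly_connected n T \<and> aperiodic n T \<and>
              society xk f n x0 \<and> mean_field eps n T x0 xk f \<and> wise C n T \<and>
              strongly_connected n (tstar n 0 x0 T)
              \<longrightarrow> (\<forall>t > 0. prob_right_wins n (belief n (tstar n 0 x0 T) x0 t) = 0)))"
  using part1 part2 by blast

end
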